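(* Let $A\in\mathbb{R}^{n\times d}$, $k\ge1$, $0<\epsilon\le1$ with $10/\epsilon$ an integer, and $t=10/\epsilon+1$. Let $\{0\}=P_0\subseteq P_1\subseteq\cdots\subseteq P_t$ be linear subspaces of $\mathbb{R}^d$ such that for every $i\in[t]$, $$\|A(I-\mathbb{P}_{P_i})\|_{1,2}\le(1+\epsilon)\,\mathrm{SubApx}_{k,1}(A(I-\mathbb{P}_{P_{i-1}})).$$ Then for at least $9/\epsilon$ indices $j\in\{1,\dots,10/\epsilon\}$ the following holds: for every linear subspace $W$ of dimension at most $k$, $$\|A(I-\mathbb{P}_{P_j})\|_{1,2}-\|A(I-\mathbb{P}_{P_j+W})\|_{1,2}\le4\epsilon\,\mathrm{SubApx}_{k,1}(A).$$
   Context: $\|M\|_{1,2}=\sum_i\|M_{i*}\|_2$. $\mathbb{P}_Q$ is the orthogonal projection matrix onto subspace $Q$; $P_j+W$ is the span of $P_j\cup W$. For $M$ with rows in $\mathbb{R}^d$, $\mathrm{SubApx}_{k,1}(M)=\min\{\sum_i\mathrm{dist}(M_{i*},Q):Q\text{ linear subspace},\dim Q\le k\}$. *)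

theory Defs
  imports "HOL-Analysis.Analysis"
begin

text \<open>Matrices M in R^(n x d) are represented as real^'d^'n; row i is M $ i.\<close>

definition proj :: "('a::euclidean_space) set \<Rightarrow> 'a \<Rightarrow> 'a" where
  "proj Q x = (THE p. p \<in> Q \<and> (\<forall>q\<in>Q. (x - p) \<bullet> q = 0))"

text \<open>The matrix M (I - P_Q): its i-th row is M_i - P_Q M_i (P_Q is symmetric).\<close>
definition resid :: "real^'d^'n \<Rightarrow> (real^'d) set \<Rightarrow> real^'d^'n" where
  "resid M Q = (\<chi> i. M $ i - proj Q (M $ i))"

definition norm12 :: "real^'d^'n \<Rightarrow> real" where
  "norm12 M = (\<Sum>i\<in>UNIV. norm (M $ i))"

definition SubApx :: "nat \<Rightarrow> real^'d^'n \<Rightarrow> real" where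
  "SubApx k M = Inf {(\<Sum>i\<in>UNIV. infdist (M $ i) Q) | Q. subspace Q \<and> dim Q \<le> k}"

end

theory Submission
  imports Defs
begin

lemma proj_unique:
  fixes Q :: "'a::euclidean_space set"
  assumes "subspace Q" "p \<in> Q" "\<forall>q\<in>Q. (x - p) \<bullet> q = 0"
  shows "proj Q x = p"
  unfolding proj_def
proof (rule the_equality)
  show "p \<in> Q \<and> (\<forall>q\<in>Q. (x - p) \<bullet> q = 0)" using assms by blast
next
  fix p' assume h: "p' \<in> Q \<and> (\<forall>q\<in>Q. (x - p') \<bullet> q = 0)"
  have d: "p' - p \<in> Q" using h assms subspace_diff by blast
  have "(x - p) \<bullet> (p' - p) = 0" "(x - p') \<bullet> (p' - p) = 0" using h assms d by auto
  then have "(p' - p) \<bullet> (p' - p) = 0" by (simp add: inner_diff_left)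
  then show "p' = p" by simp
qed

lemma proj_props:
  fixes Q :: "'a::euclidean_space set"
  assumes "subspace Q"
  shows "proj Q x \<in> Q \<and> (\<forall>q\<in>Q. (x - proj Q x) \<bullet> q = 0)"
proof -
  obtain y z where y: "y \<in> span Q" and z: "\<And>w. w \<in> span Q \<Longrightarrow> orthogonal z w" and xe: "x = y + z"
    using orthogonal_subspace_decomp_exists[of Q x] by blast
  have sQ: "span Q = Q" using assms by (simp add: span_eq_iff)
  have yQ: "y \<in> Q" using y sQ by simp
  have zo: "\<forall>q\<in>Q. (x - y) \<bullet> q = 0"
  proof
    fix q assume "q \<in> Q"
    then have "orthogonal z q" using z sQ by simp
    moreover have "x - y = z" using xe by simp
    ultimately show "(x - y) \<bullet> q = 0" by (simp add: orthogonal_def)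
  qed
  have "proj Q x = y" by (rule proj_unique[OF assms yQ zo])
  then show ?thesis using yQ zo by simp
qed

lemma proj_min:
  fixes Q :: "'a::euclidean_space set"
  assumes "subspace Q" "q \<in> Q"
  shows "norm (x - proj Q x) \<le> norm (x - q)"
proof -
  let ?p = "proj Q x"
  have pp: "?p \<in> Q" "\<forall>q\<in>Q. (x - ?p) \<bullet> q = 0" using proj_props[OF assms(1)] by auto
  have pq: "?p - q \<in> Q" using pp(1) assms subspace_diff by blast
  have o: "orthogonal (x - ?p) (?p - q)" using pp(2) pq unfolding orthogonal_def by blast
  have e: "x - q = (x - ?p) + (?p - q)" by simp
  have "(norm (x - q))\<^sup>2 = (norm (x - ?p))\<^sup>2 + (norm (?p - q))\<^sup>2"
    unfolding e by (rule norm_add_Pythagorean[OF o])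
  then have "(norm (x - ?p))\<^sup>2 \<le> (norm (x - q))\<^sup>2" by simp
  then show ?thesis by (rule power2_le_imp_le) simp
qed

lemma proj_linear:
  fixes Q :: "'a::euclidean_space set"
  assumes "subspace Q"
  shows "linear (proj Q)"
proof (rule linearI)
  fix x y
  show "proj Q (x + y) = proj Q x + proj Q y"
    apply (rule proj_unique[OF assms])
    using proj_props[OF assms, of x] proj_props[OF assms, of y] assms
    by (auto simp: subspace_add inner_diff_left inner_add_left algebra_simps)
next
  fix c :: real and x
  show "proj Q (c *\<^sub>R x) = c *\<^sub>R proj Q x"
  proof (rule proj_unique[OF assms])
    show "c *\<^sub>R proj Q x \<in> Q" using proj_props[OF assms, of x] assms by (simp add: subspace_scale)
    show "\<forall>q\<in>Q. (c *\<^sub>R x - c *\<^sub>R proj Q x) \<bullet> q = 0"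
      using proj_props[OF assms, of x]
      by (metis inner_scaleR_left mult_zero_right scaleR_right_diff_distrib)
  qed
qed

lemma infdist_proj:
  fixes Q :: "'a::euclidean_space set"
  assumes "subspace Q"
  shows "infdist x Q = norm (x - proj Q x)"
proof (rule antisym)
  show "infdist x Q \<le> norm (x - proj Q x)"
    using infdist_le[of "proj Q x" Q x] proj_props[OF assms] by (simp add: dist_norm)
  have "Q \<noteq> {}" using assms subspace_0 by blast
  then obtain q where "q \<in> Q" "infdist x Q = dist x q"
    using infdist_attains_inf closed_subspace[OF assms] by metis
  then show "norm (x - proj Q x) \<le> infdist x Q"
    using proj_min[OF assms] by (simp add: dist_norm)
qed

lemma resid_linear:
  fixes P :: "'a::euclidean_space set"
  assumes "subspace P"
  shows "linear (\<lambda>x. x - proj P x)"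
  using proj_linear[OF assms]
  by (intro linearI) (auto simp: linear_add linear_scale algebra_simps)

lemma contract:
  fixes P Q :: "'a::euclidean_space set"
  assumes P: "subspace P" and Q: "subspace Q"
  shows "subspace ((\<lambda>x. x - proj P x) ` Q)" "dim ((\<lambda>x. x - proj P x) ` Q) \<le> dim Q"
    and "q \<in> Q \<Longrightarrow> p \<in> P \<Longrightarrow> infdist (x - proj P x) ((\<lambda>x. x - proj P x) ` Q) \<le> norm (x - q - p)"
proof -
  have L: "linear (\<lambda>x. x - proj P x)" by (rule resid_linear[OF P])
  show "subspace ((\<lambda>x. x - proj P x) ` Q)" using L Q by (rule linear_subspace_image)
  show "dim ((\<lambda>x. x - proj P x) ` Q) \<le> dim Q" using L by (rule dim_image_le)
  assume q: "q \<in> Q" and p: "p \<in> P"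
  have "infdist (x - proj P x) ((\<lambda>x. x - proj P x) ` Q) \<le> dist (x - proj P x) (q - proj P q)"
    using q by (intro infdist_le) auto
  also have "\<dots> = norm ((x - q) - proj P (x - q))"
    unfolding linear_diff[OF proj_linear[OF P], of x q] dist_norm by (simp add: algebra_simps)
  also have "\<dots> \<le> norm ((x - q) - p)" by (rule proj_min[OF P p])
  finally show "infdist (x - proj P x) ((\<lambda>x. x - proj P x) ` Q) \<le> norm (x - q - p)" .
qed

lemma SubApx_le:
  fixes M :: "real^'d^'n"
  assumes "subspace Q" "dim Q \<le> k"
  shows "SubApx k M \<le> (\<Sum>i\<in>UNIV. infdist (M $ i) Q)"
  unfolding SubApx_def
proof (rule cInf_lower)
  show "(\<Sum>i\<in>UNIV. infdist (M $ i) Q) \<in> {\<Sum>i\<in>UNIV. infdist (M $ i) Q |Q. subspace Q \<and> dim Q \<le> k}"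
    using assms by blast
  show "bdd_below {\<Sum>i\<in>UNIV. infdist (M $ i) Q |Q. subspace Q \<and> dim Q \<le> k}"
    by (rule bdd_belowI[of _ 0]) (auto intro: sum_nonneg infdist_nonneg)
qed

lemma SubApx_ge:
  fixes M :: "real^'d^'n"
  assumes "\<And>Q. subspace Q \<Longrightarrow> dim Q \<le> k \<Longrightarrow> c \<le> (\<Sum>i\<in>UNIV. infdist (M $ i) Q)"
  shows "c \<le> SubApx k M"
  unfolding SubApx_def
proof (rule cInf_greatest)
  show "{\<Sum>i\<in>UNIV. infdist (M $ i) Q |Q. subspace Q \<and> dim Q \<le> k} \<noteq> {}"
    using subspace_0[of "{0::real^'d}"] by (auto intro!: exI[of _ "{0}"] subspace_0)
  show "\<And>x. x \<in> {\<Sum>i\<in>UNIV. infdist (M $ i) Q |Q. subspace Q \<and> dim Q \<le> k} \<Longrightarrow> c \<le> x"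
    using assms by blast
qed

lemma SubApx_nonneg: "0 \<le> SubApx k (M::real^'d^'n)"
  by (rule SubApx_ge) (auto intro: sum_nonneg infdist_nonneg)

lemma norm12_resid: "norm12 (resid M Q) = (\<Sum>i\<in>UNIV. norm (M $ i - proj Q (M $ i)))"
  by (simp add: norm12_def resid_def)

lemma SubApx_resid_le:
  fixes A :: "real^'d^'n"
  assumes "subspace P"
  shows "SubApx k (resid A P) \<le> SubApx k A"
proof (rule SubApx_ge)
  fix Q :: "(real^'d) set" assume Q: "subspace Q" "dim Q \<le> k"
  let ?Q = "(\<lambda>x. x - proj P x) ` Q"
  have "SubApx k (resid A P) \<le> (\<Sum>i\<in>UNIV. infdist (resid A P $ i) ?Q)"
    using contract[OF assms Q(1)] Q(2) by (intro SubApx_le) auto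
  also have "\<dots> \<le> (\<Sum>i\<in>UNIV. infdist (A $ i) Q)"
  proof (rule sum_mono)
    fix i
    have "infdist (resid A P $ i) ?Q \<le> norm (A $ i - proj Q (A $ i) - 0)"
      unfolding resid_def using contract(3)[OF assms Q(1), of "proj Q (A $ i)" 0 "A $ i"]
        proj_props[OF Q(1)] subspace_0[OF assms] by simp
    then show "infdist (resid A P $ i) ?Q \<le> infdist (A $ i) Q"
      by (simp add: infdist_proj[OF Q(1)])
  qed
  finally show "SubApx k (resid A P) \<le> (\<Sum>i\<in>UNIV. infdist (A $ i) Q)" .
qed

lemma SubApx_resid_le_W:
  fixes A :: "real^'d^'n"
  assumes P: "subspace P" and W: "subspace W" "dim W \<le> k"
  shows "SubApx k (resid A P) \<le> norm12 (resid A (span (P \<union> W)))"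
proof -
  let ?Q = "(\<lambda>x. x - proj P x) ` W"
  let ?V = "span (P \<union> W)"
  have V: "subspace ?V" by simp
  have "SubApx k (resid A P) \<le> (\<Sum>i\<in>UNIV. infdist (resid A P $ i) ?Q)"
    using contract[OF P W(1)] W(2) by (intro SubApx_le) auto
  also have "\<dots> \<le> norm12 (resid A ?V)"
    unfolding norm12_resid
  proof (rule sum_mono)
    fix i
    have "proj ?V (A $ i) \<in> ?V" using proj_props[OF V] by blast
    then have "proj ?V (A $ i) \<in> {x + y | x y. x \<in> span P \<and> y \<in> span W}"
      by (simp only: span_Un)
    then obtain p w where pw0: "p \<in> span P" "w \<in> span W" "proj ?V (A $ i) = p + w"
      by blast
    have pw: "p \<in> P" "w \<in> W" "proj ?V (A $ i) = p + w"
    proof -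
      have "span P = P" "span W = W" using P W(1) by (simp_all add: span_eq_iff)
      then show "p \<in> P" "w \<in> W" "proj ?V (A $ i) = p + w" using pw0 by (simp_all del: span_eq_iff)
    qed
    have "infdist (resid A P $ i) ?Q \<le> norm (A $ i - w - p)"
      unfolding resid_def using contract(3)[OF P W(1) pw(2) pw(1)] by simp
    also have "\<dots> = norm (A $ i - proj ?V (A $ i))" using pw(3) by (simp add: algebra_simps)
    finally show "infdist (resid A P $ i) ?Q \<le> norm (A $ i - proj ?V (A $ i))" .
  qed
  finally show ?thesis .
qed

lemma norm12_mono:
  fixes A :: "real^'d^'n"
  assumes "subspace P" "subspace P'" "P \<subseteq> P'"
  shows "norm12 (resid A P') \<le> norm12 (resid A P)"
  unfolding norm12_resid
proof (rule sum_mono)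
  fix i
  have "proj P (A $ i) \<in> P'" using proj_props[OF assms(1)] assms(3) by blast
  then show "norm (A $ i - proj P' (A $ i)) \<le> norm (A $ i - proj P (A $ i))"
    by (rule proj_min[OF assms(2)])
qed

lemma resid_zero: "resid A {0} = A"
proof -
  have h: "proj {0} x = 0" for x :: "real^'d" by (rule proj_unique) auto
  show ?thesis unfolding resid_def h by simp
qed

theorem mainTheorem11:
  fixes A :: "real^'d^'n" and k m :: nat and \<epsilon> :: real
    and P :: "nat \<Rightarrow> (real^'d) set"
  assumes "k \<ge> 1"
    and "0 < \<epsilon>" and "\<epsilon> \<le> 1"
    and "real m = 10 / \<epsilon>"
    and "P 0 = {0}"
    and "\<And>i. i \<le> m + 1 \<Longrightarrow> subspace (P i)"
    and "\<And>i. i < m + 1 \<Longrightarrow> P i \<subseteq> P (Suc i)"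
    and "\<And>i. 1 \<le> i \<Longrightarrow> i \<le> m + 1 \<Longrightarrow>
           norm12 (resid A (P i)) \<le> (1 + \<epsilon>) * SubApx k (resid A (P (i - 1)))"
  shows "real (card {j \<in> {1..m}. \<forall>W. subspace W \<and> dim W \<le> k \<longrightarrow>
            norm12 (resid A (P j)) - norm12 (resid A (span (P j \<union> W)))
              \<le> 4 * \<epsilon> * SubApx k A}) \<ge> 9 / \<epsilon>"
proof -
  define G where "G = {j \<in> {1..m}. \<forall>W. subspace W \<and> dim W \<le> k \<longrightarrow>
            norm12 (resid A (P j)) - norm12 (resid A (span (P j \<union> W)))
              \<le> 4 * \<epsilon> * SubApx k A}"
  define f where "f j = norm12 (resid A (P j))" for j
  define S where "S = SubApx k A"
  define B where "B = {1..m} - G"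
  have eps: "0 < \<epsilon>" "\<epsilon> \<le> 1" using assms by auto
  have S0: "0 \<le> S" unfolding S_def by (rule SubApx_nonneg)
  have fpos: "0 \<le> f j" for j unfolding f_def norm12_def by (auto intro: sum_nonneg)
  have mono: "f (Suc j) \<le> f j" if "j \<le> m" for j
    unfolding f_def using that assms(6,7) by (intro norm12_mono) auto
  have f1: "f 1 \<le> (1 + \<epsilon>) * S"
    using assms(8)[of 1] assms(5) unfolding f_def S_def by (simp add: resid_zero)
  have SR: "SubApx k (resid A (P j)) \<le> S" if "j \<le> m + 1" for j
    unfolding S_def using that assms(6) by (intro SubApx_resid_le) auto
  have bad: "f (Suc j) \<le> f j - 3 * \<epsilon> * S" if j: "j \<in> B" for j
  proof -
    have jm: "1 \<le> j" "j \<le> m" using j unfolding B_def by auto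
    from j obtain W where W: "subspace W" "dim W \<le> k"
      and gt: "norm12 (resid A (P j)) - norm12 (resid A (span (P j \<union> W))) > 4 * \<epsilon> * S"
      unfolding B_def G_def S_def by auto
    let ?s = "SubApx k (resid A (P j))"
    have "?s \<le> norm12 (resid A (span (P j \<union> W)))"
      using W assms(6) jm by (intro SubApx_resid_le_W) auto
    then have s1: "?s < f j - 4 * \<epsilon> * S" using gt unfolding f_def by linarith
    have s2: "\<epsilon> * ?s \<le> \<epsilon> * S" using SR[of j] jm eps by (intro mult_left_mono) auto
    have "f (Suc j) \<le> (1 + \<epsilon>) * ?s" using assms(8)[of "Suc j"] jm unfolding f_def by simp
    also have "\<dots> = ?s + \<epsilon> * ?s" by (simp add: algebra_simps)
    finally show ?thesis using s1 s2 by linarith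
  qed
  have ind: "f (Suc n) \<le> f 1 - 3 * \<epsilon> * S * card ({1..n} \<inter> B)" if "n \<le> m" for n
    using that
  proof (induction n)
    case 0
    then show ?case by simp
  next
    case (Suc n)
    have IH: "f (Suc n) \<le> f 1 - 3 * \<epsilon> * S * card ({1..n} \<inter> B)" using Suc by simp
    show ?case
    proof (cases "Suc n \<in> B")
      case True
      have "{1..Suc n} \<inter> B = insert (Suc n) ({1..n} \<inter> B)" using True by auto
      then have c: "card ({1..Suc n} \<inter> B) = Suc (card ({1..n} \<inter> B))" by simp
      show ?thesis using bad[OF True] IH c by (simp add: algebra_simps)
    next
      case False
      have "{1..Suc n} \<inter> B = {1..n} \<inter> B" using False by (auto simp: le_Suc_eq)
      then show ?thesis using mono[of "Suc n"] Suc.prems IH by simp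
    qed
  qed
  have BB: "B \<subseteq> {1..m}" unfolding B_def by auto
  have main: "3 * \<epsilon> * S * card B \<le> (1 + \<epsilon>) * S"
    using ind[of m] fpos[of "Suc m"] f1 BB by (simp add: Int_absorb1)
  have cB: "real (card B) * \<epsilon> \<le> 2 / 3"
  proof (cases "S = 0")
    case False
    then have "0 < S" using S0 by simp
    then have "3 * \<epsilon> * card B \<le> 1 + \<epsilon>" using main
      by (metis mult.commute mult.left_commute mult_le_cancel_left_pos)
    then show ?thesis using eps by (simp add: algebra_simps)
  next
    case True
    have "B = {}"
    proof (rule ccontr)
      assume "B \<noteq> {}"
      then obtain j where j: "j \<in> B" by blast
      have jm: "1 \<le> j" "j \<le> m" using j unfolding B_def by auto
      from j obtain W where W: "subspace W" "dim W \<le> k"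
        and gt: "norm12 (resid A (P j)) - norm12 (resid A (span (P j \<union> W))) > 4 * \<epsilon> * S"
        unfolding B_def G_def S_def by auto
      have "0 \<le> norm12 (resid A (span (P j \<union> W)))" unfolding norm12_def by (auto intro: sum_nonneg)
      then have "f j > 0" using gt True unfolding f_def by simp
      moreover have "f j \<le> f 1 - 3 * \<epsilon> * S * card ({1..j-1} \<inter> B)"
        using ind[of "j - 1"] jm by simp
      ultimately show False using f1 True by simp
    qed
    then show ?thesis by simp
  qed
  have GB: "card G + card B = m"
  proof -
    have "G \<subseteq> {1..m}" unfolding G_def by auto
    then have "card B = card {1..m} - card G" unfolding B_def
      using card_Diff_subset[of G "{1..m}"] finite_subset[of G "{1..m}"] by simp
    moreover have "card G \<le> card {1..m}" using card_mono[OF finite_atLeastAtMost \<open>G \<subseteq> {1..m}\<close>] by simp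
    ultimately show ?thesis by simp
  qed
  have "real (card G) = 10 / \<epsilon> - real (card B)" using GB assms(4) by linarith
  moreover have "real (card B) \<le> 1 / \<epsilon>" using cB eps by (simp add: field_simps)
  moreover have "10 / \<epsilon> - 1 / \<epsilon> = 9 / \<epsilon>" by (simp add: field_simps)
  ultimately have "real (card G) \<ge> 9 / \<epsilon>" by linarith
  then show ?thesis unfolding G_def .
qed

end
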